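(* For every positive integer $n$ such that $h_{n-1}h_{n+1}-h_n^2\neq 0$, $$h_{n+3}=\frac{h_{n+1}^3-2h_nh_{n+1}h_{n+2}+h_{n-1}h_{n+2}^2}{h_{n-1}h_{n+1}-h_n^2}.$$
   Context: Let $p,q,a,b$ be complex numbers. The Horadam-Lucas sequence $(h_n)_{n\ge0}$ is defined by $h_0=2b-ap$, $h_1=bp-2aq$, and $h_n=ph_{n-1}-qh_{n-2}$ for $n\ge 2$. *)

theory Defs
  imports Complex_Main
begin

fun horadam_lucas :: "complex \<Rightarrow> complex \<Rightarrow> complex \<Rightarrow> complex \<Rightarrow> nat \<Rightarrow> complex" where
  "horadam_lucas p q a b 0 = 2 * b - a * p"
| "horadam_lucas p q a b (Suc 0) = b * p - 2 * a * q"
| "horadam_lucas p q a b (Suc (Suc n)) =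
     p * horadam_lucas p q a b (Suc n) - q * horadam_lucas p q a b n"

end

theory Submission
  imports Defs
begin

lemma key: "((p*(p*(p*y-q*x)-q*y)-q*(p*y-q*x))::complex) * (x*(p*y-q*x) - y^2) =
  (p*y-q*x)^3 - 2*y*(p*y-q*x)*(p*(p*y-q*x)-q*y) + x*(p*(p*y-q*x)-q*y)^2"
  by algebra

theorem mainTheorem4:
  fixes p q a b :: complex and n :: nat
  defines "h \<equiv> horadam_lucas p q a b"
  assumes "n \<ge> 1"
    and "h (n - 1) * h (n + 1) - (h n)^2 \<noteq> 0"
  shows "h (n + 3) =
    ((h (n + 1))^3 - 2 * h n * h (n + 1) * h (n + 2) + h (n - 1) * (h (n + 2))^2)
    / (h (n - 1) * h (n + 1) - (h n)^2)"
proof -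
  obtain m where m: "n = Suc m" using assms(2) by (cases n) auto
  have r: "h (Suc (Suc k)) = p * h (Suc k) - q * h k" for k by (simp add: h_def)
  have e1: "h (n+1) = p * h n - q * h m" using r[of m] m by simp
  have e2: "h (n+2) = p * h (n+1) - q * h n" using r[of n] by simp
  have e3: "h (n+3) = p * h (n+2) - q * h (n+1)" using r[of "n+1"] by (simp add: numeral_3_eq_3)
  have hm: "h (n-1) = h m" using m by simp
  show ?thesis using assms(3) unfolding hm e3 e2 e1
    by (simp add: eq_divide_eq key[of p "h n" q "h m"])
qed

end
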